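(* Let $X$ be a real Hilbert space, $I=\{1,\dots,m\}$, and $(U_i)_{i\in I}$ closed linear subspaces of $X$. Set $U_{m+1}=U_1$, and suppose $U_i+U_{i+1}$ is closed for every $i\in I$. Set $T_i=P_{U_{i+1}}R_{U_i}+\mathrm{Id}-P_{U_i}$, $Z_i=\operatorname{Fix}T_i$, $Z=\bigcap_{i\in I}Z_i$, and $T=T_m\cdots T_1$. Suppose the family $(Z_i)_{i\in I}$ is boundedly linearly regular. Then for every $x_0\in X$, the sequence $(T^nx_0)_{n\in\mathbb N}$ converges linearly to a point of $Z$.
   Context: $P_S$ is the orthogonal projection onto $S$, $R_S=2P_S-\mathrm{Id}$. A finite family $(C_i)_{i\in I}$ of closed convex sets with $C=\bigcap_iC_i\ne\varnothing$ is boundedly linearly regular if for every $\rho>0$ there is $\mu>0$ with $d_C(x)\le\mu\max_{i}d_{C_i}(x)$ for all $\|x\|\le\rho$. Linear convergence to $\bar x$ means $\|x_n-\bar x\|\le cq^n$ for some $c\ge0$, $q\in[0,1[$. *)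

theory Defs
  imports "HOL-Analysis.Analysis"
begin

text \<open>Orthogonal (metric) projection onto a set S: the unique nearest point.
  Well defined for nonempty closed convex sets of a real Hilbert space.\<close>
definition proj :: "'a::real_inner set \<Rightarrow> 'a \<Rightarrow> 'a" where
  "proj S x = (THE p. p \<in> S \<and> (\<forall>y\<in>S. dist x p \<le> dist x y))"

definition reflector :: "'a::real_inner set \<Rightarrow> 'a \<Rightarrow> 'a" where
  "reflector S x = 2 *\<^sub>R proj S x - x"

definition Fix :: "('a \<Rightarrow> 'a) \<Rightarrow> 'a set" where
  "Fix f = {x. f x = x}"

fun comp_upto :: "(nat \<Rightarrow> 'a \<Rightarrow> 'a) \<Rightarrow> nat \<Rightarrow> 'a \<Rightarrow> 'a" where
  "comp_upto T 0 = id"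
| "comp_upto T (Suc k) = T (Suc k) \<circ> comp_upto T k"

definition boundedly_linearly_regular :: "'i set \<Rightarrow> ('i \<Rightarrow> 'a::real_normed_vector set) \<Rightarrow> bool" where
  "boundedly_linearly_regular I C \<longleftrightarrow>
     finite I \<and> I \<noteq> {} \<and> (\<forall>i\<in>I. closed (C i) \<and> convex (C i)) \<and> (\<Inter>i\<in>I. C i) \<noteq> {} \<and>
     (\<forall>\<rho>>0. \<exists>\<mu>>0. \<forall>x. norm x \<le> \<rho> \<longrightarrow>
        infdist x (\<Inter>i\<in>I. C i) \<le> \<mu> * Max ((\<lambda>i. infdist x (C i)) ` I))"

definition converges_linearly :: "(nat \<Rightarrow> 'a::real_normed_vector) \<Rightarrow> 'a \<Rightarrow> bool" where
  "converges_linearly x xb \<longleftrightarrow>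
     (\<exists>c q. c \<ge> 0 \<and> 0 \<le> q \<and> q < 1 \<and> (\<forall>n. norm (x n - xb) \<le> c * q ^ n))"

end

theory Submission
  imports Defs
begin



lemma le_of_eps:
  fixes a b K :: real
  assumes "K \<ge> 0" "\<And>d. d > 0 \<Longrightarrow> a \<le> b + K * d"
  shows "a \<le> b"
proof (rule ccontr)
  assume "\<not> a \<le> b"
  hence "(a - b) / (2*(K+1)) > 0" using assms(1) by auto
  from assms(2)[OF this] have "a \<le> b + K * ((a - b) / (2*(K+1)))" .
  moreover have "K * ((a - b) / (2*(K+1))) < a - b"
    using \<open>\<not> a \<le> b\<close> assms(1) mult_left_mono[of b a K] by (simp add: field_simps)
  ultimately show False by linarith
qed

lemma parallelogram_mid:
  fixes x p q :: "'a::real_inner"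
  shows "norm (x - (1/2) *\<^sub>R (p + q))^2 = (norm (x-p)^2 + norm (x-q)^2)/2 - norm (p - q)^2/4"
  by (simp add: power2_norm_eq_inner inner_diff_left inner_diff_right inner_add_left inner_add_right
       inner_commute algebra_simps) (simp add: field_simps)

lemma nearest_exists:
  fixes S :: "'a::{real_inner,complete_space} set"
  assumes cl: "closed S" and cv: "convex S" and ne: "S \<noteq> {}"
  shows "\<exists>p\<in>S. \<forall>y\<in>S. dist x p \<le> dist x y"
proof -
  define d where "d = infdist x S"
  have d0: "d \<ge> 0" by (simp add: d_def infdist_nonneg)
  have dle: "d \<le> dist x y" if "y \<in> S" for y using that by (simp add: d_def infdist_le)
  have "\<exists>y\<in>S. dist x y < d + 1/(Suc n)" for n
  proof -
    have "1/(Suc n) > (0::real)" by simp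
    have "infdist x S = (INF a\<in>S. dist x a)" using ne by (simp add: infdist_notempty)
    hence "(INF a\<in>S. dist x a) < d + 1/(Suc n)" by (simp add: d_def)
    then show ?thesis by (subst (asm) cINF_less_iff) (use ne in \<open>auto intro: bdd_belowI2[where m=0]\<close>)
  qed
  then obtain y where yS: "\<And>n. y n \<in> S" and yd: "\<And>n. dist x (y n) < d + 1/(Suc n)"
    by metis
  have mid: "(1/2) *\<^sub>R (y n + y k) \<in> S" for n k
  proof -
    have "(1/2) *\<^sub>R y n + (1/2) *\<^sub>R y k \<in> S"
      using cv yS by (intro convexD) auto
    thus ?thesis by (simp add: scaleR_right_distrib)
  qed
  have sq: "(dist x (y n))^2 \<le> d^2 + (2*d+1)/(Suc n)" for n
  proof -
    have a: "dist x (y n) \<le> d + 1/(Suc n)" using yd[of n] by simp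
    have "(dist x (y n))^2 \<le> (d + 1/(Suc n))^2"
      using a by (intro power_mono) auto
    also have "\<dots> = d^2 + (2*d + 1/Suc n)/(Suc n)"
    proof -
      have g: "\<And>t::real. t > 0 \<Longrightarrow> (d + 1/t)^2 = d^2 + (2*d + 1/t)/t"
        by (simp add: power2_eq_square field_simps)
      show ?thesis by (rule g) simp
    qed
    also have "\<dots> \<le> d^2 + (2*d+1)/(Suc n)"
      by (intro add_left_mono divide_right_mono) auto
    finally show ?thesis .
  qed
  have bound: "(norm (y n - y k))^2 \<le> 2*((2*d+1)/(Suc n)) + 2*((2*d+1)/(Suc k))" for n k
  proof -
    have "d^2 \<le> (norm (x - (1/2) *\<^sub>R (y n + y k)))^2"
      using dle[OF mid[of n k]] d0 by (simp add: dist_norm power_mono)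
    also have "\<dots> = (norm (x - y n)^2 + norm (x - y k)^2)/2 - norm (y n - y k)^2/4"
      by (rule parallelogram_mid)
    finally have "d^2 \<le> (norm (x - y n)^2 + norm (x - y k)^2)/2 - norm (y n - y k)^2/4" .
    moreover have "norm (x - y n)^2 \<le> d^2 + (2*d+1)/(Suc n)" using sq[of n] by (simp add: dist_norm)
    moreover have "norm (x - y k)^2 \<le> d^2 + (2*d+1)/(Suc k)" using sq[of k] by (simp add: dist_norm)
    moreover have "\<And>D a b N p q :: real. D \<le> (a+b)/2 - N/4 \<Longrightarrow> a \<le> D + p \<Longrightarrow> b \<le> D + q \<Longrightarrow> N \<le> 2*p+2*q"
      by argo
    ultimately show ?thesis by blast
  qed
  have "Cauchy y"
  proof (rule metric_CauchyI)
    fix e :: real assume e: "e > 0"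
    obtain N where N: "4*(2*d+1) / e^2 < real N" using reals_Archimedean2 by blast
    show "\<exists>M. \<forall>m\<ge>M. \<forall>n\<ge>M. dist (y m) (y n) < e"
    proof (intro exI allI impI)
      fix m n assume mn: "N \<le> m" "N \<le> n"
      have h: "(2*d+1)/(Suc k) \<le> (2*d+1)/(Suc N)" if "N \<le> k" for k
        using that d0 by (intro divide_left_mono) auto
      have "(norm (y m - y n))^2 \<le> 4*((2*d+1)/(Suc N))"
        using bound[of m n] h[OF mn(1)] h[OF mn(2)] by argo
      also have "\<dots> < e^2"
        using N e d0 by (simp add: field_simps) (smt (verit) zero_less_power)
      finally have "(norm (y m - y n))^2 < e^2" .
      thus "dist (y m) (y n) < e" using e by (simp add: dist_norm power_less_imp_less_base)
    qed
  qed
  then obtain p where yp: "y \<longlonglongrightarrow> p" using Cauchy_convergent_iff convergent_def by blast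
  have pS: "p \<in> S" using cl yS yp closed_sequentially by blast
  have "(\<lambda>n. dist x (y n)) \<longlonglongrightarrow> dist x p" by (intro tendsto_intros yp)
  moreover have "(\<lambda>n. d + 1/(Suc n)) \<longlonglongrightarrow> d"
    using tendsto_add[OF tendsto_const LIMSEQ_Suc[OF lim_inverse_n']] by (simp add: divide_inverse)
  ultimately have "dist x p \<le> d"
    by (rule LIMSEQ_le) (use yd less_imp_le in auto)
  thus ?thesis using pS dle by force
qed




lemma nearest_unique:
  fixes S :: "'a::real_inner set"
  assumes cv: "convex S" and p: "p \<in> S" "\<forall>y\<in>S. dist x p \<le> dist x y"
    and q: "q \<in> S" "\<forall>y\<in>S. dist x q \<le> dist x y"
  shows "p = q"
proof -
  have m: "(1/2) *\<^sub>R (p + q) \<in> S"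
  proof -
    have "(1/2) *\<^sub>R p + (1/2) *\<^sub>R q \<in> S" using cv p q by (intro convexD) auto
    thus ?thesis by (simp add: scaleR_right_distrib)
  qed
  have e: "dist x p = dist x q" using p q by (meson order_antisym)
  have "dist x p \<le> norm (x - (1/2) *\<^sub>R (p + q))" using p(2) m by (simp add: dist_norm)
  hence "(dist x p)^2 \<le> (norm (x - (1/2) *\<^sub>R (p + q)))^2" by (simp add: power_mono)
  also have "\<dots> = (norm (x-p)^2 + norm (x-q)^2)/2 - norm (p - q)^2/4" by (rule parallelogram_mid)
  finally have "norm (p - q)^2 \<le> 0" using e by (simp add: dist_norm)
  thus ?thesis by simp
qed

lemma proj_unique:
  fixes S :: "'a::real_inner set"
  assumes "convex S" "p \<in> S" "\<forall>y\<in>S. dist x p \<le> dist x y"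
  shows "proj S x = p"
  unfolding proj_def
  by (rule the_equality) (use assms nearest_unique in blast)+

lemma proj_props:
  fixes S :: "'a::{real_inner,complete_space} set"
  assumes "closed S" "convex S" "S \<noteq> {}"
  shows "proj S x \<in> S" "\<And>y. y \<in> S \<Longrightarrow> dist x (proj S x) \<le> dist x y"
proof -
  obtain p where "p \<in> S" "\<forall>y\<in>S. dist x p \<le> dist x y" using nearest_exists[OF assms] by blast
  moreover have "proj S x = p" using proj_unique assms calculation by blast
  ultimately show "proj S x \<in> S" "\<And>y. y \<in> S \<Longrightarrow> dist x (proj S x) \<le> dist x y" by auto
qed

lemma infdist_proj:
  fixes S :: "'a::{real_inner,complete_space} set"
  assumes "closed S" "convex S" "S \<noteq> {}"
  shows "infdist x S = dist x (proj S x)"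
proof (rule antisym)
  show "infdist x S \<le> dist x (proj S x)" using proj_props[OF assms] by (simp add: infdist_le)
  show "dist x (proj S x) \<le> infdist x S"
    using assms proj_props[OF assms] by (simp add: infdist_notempty cINF_greatest)
qed

definition csub :: "'a::real_inner set \<Rightarrow> bool" where
  "csub U \<longleftrightarrow> subspace U \<and> closed U"

definition orth :: "'a::real_inner set \<Rightarrow> 'a set" where
  "orth U = {x. \<forall>u\<in>U. inner x u = 0}"

lemma csub_basic: "csub U \<Longrightarrow> closed U \<and> convex U \<and> U \<noteq> {} \<and> 0 \<in> U"
proof -
  assume "csub U"
  hence "subspace U" "closed U" by (auto simp: csub_def)
  thus ?thesis using subspace_imp_convex[of U] subspace_0[of U] by auto
qed

lemma csub_orth: "csub (orth U)"
proof -
  have "orth U = (\<Inter>u\<in>U. {x. inner x u = 0})" by (auto simp: orth_def)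
  moreover have "closed {x. inner x u = 0}" for u :: 'a
    by (intro closed_Collect_eq continuous_intros)
  ultimately have "closed (orth U)" by auto
  moreover have "subspace (orth U)"
    unfolding subspace_def orth_def by (auto simp: inner_add_left)
  ultimately show ?thesis by (simp add: csub_def)
qed

lemma pyth: "inner u v = 0 \<Longrightarrow> norm (u + v)^2 = norm u^2 + norm v^2"
  by (simp add: power2_norm_eq_inner inner_add_left inner_add_right inner_commute)

lemma pyth_diff: "inner u v = 0 \<Longrightarrow> norm (u - v)^2 = norm u^2 + norm v^2"
  by (simp add: power2_norm_eq_inner inner_diff_left inner_diff_right inner_commute)

lemma proj_eqI:
  fixes U :: "'a::real_inner set"
  assumes U: "csub U" and p: "p \<in> U" and o: "\<And>u. u \<in> U \<Longrightarrow> inner (x - p) u = 0"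
  shows "proj U x = p"
proof (rule proj_unique)
  show "convex U" using csub_basic[OF U] by blast
  show "p \<in> U" by fact
  show "\<forall>y\<in>U. dist x p \<le> dist x y"
  proof
    fix y assume y: "y \<in> U"
    have "p - y \<in> U" using U p y by (simp add: csub_def subspace_diff)
    hence "inner (x - p) (p - y) = 0" by (rule o)
    hence "norm ((x - p) + (p - y))^2 = norm (x - p)^2 + norm (p - y)^2" by (rule pyth)
    hence "norm (x - p)^2 \<le> norm (x - y)^2" by simp
    hence "norm (x - p) \<le> norm (x - y)" by (rule power2_le_imp_le) simp
    thus "dist x p \<le> dist x y" by (simp add: dist_norm)
  qed
qed

lemma proj_in:
  fixes U :: "'a::{real_inner,complete_space} set"
  shows "csub U \<Longrightarrow> proj U x \<in> U"
  using proj_props csub_basic by blast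

lemma proj_orth:
  fixes U :: "'a::{real_inner,complete_space} set"
  assumes U: "csub U" and u: "u \<in> U"
  shows "inner (x - proj U x) u = 0"
proof -
  define p where "p = proj U x"
  define c where "c = inner (x - p) u"
  define n where "n = norm u ^ 2"
  define t where "t = c / (n + 1)"
  have pU: "p \<in> U" using proj_in[OF U] by (simp add: p_def)
  have "p + t *\<^sub>R u \<in> U" using U pU u by (simp add: csub_def subspace_add subspace_scale)
  hence "dist x p \<le> dist x (p + t *\<^sub>R u)"
    using proj_props(2) csub_basic[OF U] by (auto simp: p_def)
  hence "norm (x - p)^2 \<le> norm ((x - p) - t *\<^sub>R u)^2"
    by (simp add: dist_norm power_mono algebra_simps)
  also have "\<dots> = norm (x-p)^2 - 2*t*c + t^2 * n"
  proof -
    have g: "\<And>v w::'a. norm (v - t *\<^sub>R w)^2 = norm v^2 - 2*t*inner v w + t^2 * norm w^2"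
      unfolding power2_norm_eq_inner by (simp add: inner_diff_left inner_diff_right inner_commute
        power2_eq_square algebra_simps)
    show ?thesis by (simp add: g c_def n_def)
  qed
  finally have h: "2*t*c \<le> t^2 * n" by simp
  have n0: "n \<ge> 0" by (simp add: n_def)
  have "2*t*c = 2*c^2/(n+1)" using n0 by (simp add: t_def power2_eq_square)
  moreover have "t^2 * n = c^2 * n / (n+1)^2" by (simp add: t_def power_divide)
  ultimately have "2*c^2/(n+1) \<le> c^2 * n / (n+1)^2" using h by simp
  hence "(n+1)^2 * (2*c^2/(n+1)) \<le> (n+1)^2 * (c^2 * n / (n+1)^2)"
    by (rule mult_left_mono) simp
  moreover have "(n+1)^2 * (2*c^2/(n+1)) = 2*c^2*(n+1)" using n0
    by (simp add: power2_eq_square field_simps)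
  moreover have "(n+1)^2 * (c^2 * n / (n+1)^2) = c^2 * n" using n0
    by (simp add: field_simps)
  ultimately have "2*c^2*(n+1) \<le> c^2 * n" by simp
  hence "c^2 * (n + 2) \<le> 0" by (simp add: algebra_simps)
  hence "c^2 \<le> 0" using n0 by (smt (verit) mult_nonneg_nonneg zero_le_power2 mult_pos_pos zero_less_power2)
  thus ?thesis by (simp add: c_def p_def)
qed

lemma proj_orth': "csub U \<Longrightarrow> x - proj U x \<in> orth (U::'a::{real_inner,complete_space} set)"
  using proj_orth by (auto simp: orth_def)

lemma proj_self: "csub U \<Longrightarrow> u \<in> U \<Longrightarrow> proj U u = u"
  by (rule proj_eqI) auto

lemma proj_add:
  fixes U :: "'a::{real_inner,complete_space} set"
  assumes U: "csub U"
  shows "proj U (x + y) = proj U x + proj U y"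
proof (rule proj_eqI[OF U])
  show "proj U x + proj U y \<in> U" using proj_in[OF U] U unfolding csub_def by (simp add: subspace_add)
  fix u assume u: "u \<in> U"
  have "inner (x - proj U x) u = 0" "inner (y - proj U y) u = 0" using proj_orth U u by blast+
  moreover have "x + y - (proj U x + proj U y) = (x - proj U x) + (y - proj U y)" by simp
  ultimately show "inner (x + y - (proj U x + proj U y)) u = 0"
    by (simp only: inner_add_left)
qed

lemma proj_scale:
  fixes U :: "'a::{real_inner,complete_space} set"
  assumes U: "csub U"
  shows "proj U (c *\<^sub>R x) = c *\<^sub>R proj U x"
proof (rule proj_eqI[OF U])
  show "c *\<^sub>R proj U x \<in> U" using proj_in[OF U] U unfolding csub_def by (simp add: subspace_scale)
  fix u assume "u \<in> U"
  hence "inner (x - proj U x) u = 0" using proj_orth U by blast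
  thus "inner (c *\<^sub>R x - c *\<^sub>R proj U x) u = 0"
    by (simp add: scaleR_diff_right[symmetric])
qed

lemma proj_diff:
  fixes U :: "'a::{real_inner,complete_space} set"
  assumes U: "csub U"
  shows "proj U (x - y) = proj U x - proj U y"
  using proj_add[OF U, of x "-y"] proj_scale[OF U, of "-1" y] by simp

lemma proj_zero:
  fixes U :: "'a::{real_inner,complete_space} set"
  shows "csub U \<Longrightarrow> proj U 0 = 0"
  using proj_scale[of U 0 0] by simp

lemma proj_orth_compl:
  fixes U :: "'a::{real_inner,complete_space} set"
  assumes U: "csub U"
  shows "proj (orth U) x = x - proj U x"
proof (rule proj_eqI[OF csub_orth])
  show "x - proj U x \<in> orth U" by (rule proj_orth'[OF U])
  fix v assume "v \<in> orth U"
  moreover have "proj U x \<in> U" using proj_in[OF U] .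
  ultimately have "inner v (proj U x) = 0" unfolding orth_def by blast
  thus "inner (x - (x - proj U x)) v = 0" by (simp add: inner_commute)
qed

lemma orth_orth:
  fixes U :: "'a::{real_inner,complete_space} set"
  assumes U: "csub U"
  shows "orth (orth U) = U"
proof
  show "U \<subseteq> orth (orth U)" by (auto simp: orth_def inner_commute)
  show "orth (orth U) \<subseteq> U"
  proof
    fix x assume x: "x \<in> orth (orth U)"
    have a: "x - proj U x \<in> orth U" by (rule proj_orth'[OF U])
    have "proj U x \<in> orth (orth U)" using proj_in[OF U] by (auto simp: orth_def inner_commute)
    hence "x - proj U x \<in> orth (orth U)" using x csub_orth[of "orth U"]
      by (simp add: csub_def subspace_diff)
    hence "inner (x - proj U x) (x - proj U x) = 0" using a by (auto simp: orth_def)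
    hence "x = proj U x" by simp
    thus "x \<in> U" using proj_in[OF U] by metis
  qed
qed

lemma infdist_csub:
  fixes U :: "'a::{real_inner,complete_space} set"
  shows "csub U \<Longrightarrow> infdist x U = norm (x - proj U x)"
proof -
  assume U: "csub U"
  show ?thesis using infdist_proj[of U x] csub_basic[OF U] by (simp add: dist_norm)
qed

lemma infdist_orth:
  fixes U :: "'a::{real_inner,complete_space} set"
  shows "csub U \<Longrightarrow> infdist x (orth U) = norm (proj U x)"
proof -
  assume U: "csub U"
  have "infdist x (orth U) = norm (x - proj (orth U) x)" by (rule infdist_csub[OF csub_orth])
  also have "proj (orth U) x = x - proj U x" by (rule proj_orth_compl[OF U])
  finally show ?thesis by simp
qed

lemma csub_Int: "csub A \<Longrightarrow> csub B \<Longrightarrow> csub (A \<inter> B)"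
  unfolding csub_def using subspace_inter[of A B] closed_Int[of A B] by blast




lemma subspace_closure':
  fixes S :: "'a::real_normed_vector set"
  assumes S: "subspace S"
  shows "subspace (closure S)"
  unfolding subspace_def
proof (intro conjI ballI allI)
  show "0 \<in> closure S" using S closure_subset subspace_0 by blast
  fix x y assume x: "x \<in> closure S" and y: "y \<in> closure S"
  obtain f where f: "\<And>n. f n \<in> S" "f \<longlonglongrightarrow> x" using x closure_sequential by blast
  obtain g where g: "\<And>n. g n \<in> S" "g \<longlonglongrightarrow> y" using y closure_sequential by blast
  have "(\<lambda>n. f n + g n) \<longlonglongrightarrow> x + y" by (intro tendsto_intros f g)
  moreover have "\<And>n. f n + g n \<in> S" using S f g by (simp add: subspace_add)
  ultimately show "x + y \<in> closure S" unfolding closure_sequential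
    by (intro exI[of _ "\<lambda>n. f n + g n"] conjI) auto
next
  fix c :: real and x assume x: "x \<in> closure S"
  obtain f where f: "\<And>n. f n \<in> S" "f \<longlonglongrightarrow> x" using x closure_sequential by blast
  have "(\<lambda>n. c *\<^sub>R f n) \<longlonglongrightarrow> c *\<^sub>R x" by (intro tendsto_intros f)
  moreover have "\<And>n. c *\<^sub>R f n \<in> S" using S f by (simp add: subspace_scale)
  ultimately show "c *\<^sub>R x \<in> closure S" unfolding closure_sequential
    by (intro exI[of _ "\<lambda>n. c *\<^sub>R f n"] conjI) auto
qed

definition DP :: "'a::real_inner set \<Rightarrow> 'a set \<Rightarrow> real \<Rightarrow> bool" where
  "DP C D M \<longleftrightarrow> (\<forall>s \<in> {c + d | c d. c \<in> C \<and> d \<in> D}. \<forall>e>0. \<exists>c\<in>C. \<exists>d\<in>D.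
      norm d \<le> M * norm s \<and> norm (s - c - d) \<le> e)"

lemma lemL:
  fixes C D :: "'a::{real_inner,complete_space} set"
  assumes C: "csub C" and D: "csub D" and M: "M \<ge> 0" and dp: "DP C D M" and y: "y \<in> orth C"
  shows "infdist y (orth C \<inter> orth D) \<le> M * infdist y (orth D)"
proof -
  define S where "S = closure {c + d | c d. c \<in> C \<and> d \<in> D}"
  have S: "csub S" unfolding S_def csub_def
    using subspace_closure'[OF subspace_sums] C D by (auto simp: csub_def)
  define w where "w = proj S y"
  have wS: "w \<in> S" using proj_in[OF S] by (simp add: w_def)
  have sub: "{c + d | c d. c \<in> C \<and> d \<in> D} \<subseteq> S" unfolding S_def by (rule closure_subset)
  have CS: "C \<subseteq> S"
  proof
    fix c assume "c \<in> C" hence "c + 0 \<in> {c + d | c d. c \<in> C \<and> d \<in> D}" using csub_basic[OF D] by blast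
    thus "c \<in> S" using sub by auto
  qed
  have DS: "D \<subseteq> S"
  proof
    fix d assume "d \<in> D" hence "0 + d \<in> {c + d | c d. c \<in> C \<and> d \<in> D}" using csub_basic[OF C] by blast
    thus "d \<in> S" using sub by auto
  qed
  have yw: "y - w \<in> orth S" using proj_orth'[OF S] by (simp add: w_def)
  hence "y - w \<in> orth C \<inter> orth D" using CS DS by (auto simp: orth_def)
  hence i1: "infdist y (orth C \<inter> orth D) \<le> norm w"
    using infdist_le[of "y - w" "orth C \<inter> orth D" y] by (simp add: dist_norm)
  define pd where "pd = norm (proj D y)"
  have i2: "infdist y (orth D) = pd" using infdist_orth[OF D] by (simp add: pd_def)
  have ww: "inner y w = norm w ^ 2"
  proof -
    have "inner (y - w) w = 0" using proj_orth[OF S wS] by (simp add: w_def)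
    thus ?thesis by (simp add: inner_diff_left power2_norm_eq_inner)
  qed
  have key: "norm w ^ 2 \<le> M * pd * norm w + (2 * norm y + M * pd) * \<delta>" if dl: "\<delta> > 0" for \<delta>
  proof -
    obtain t where t: "t \<in> {c + d | c d. c \<in> C \<and> d \<in> D}" "dist t w < \<delta>"
      using wS dl unfolding S_def closure_approachable by blast
    obtain c d where cd: "c \<in> C" "d \<in> D" "norm d \<le> M * norm t" "norm (t - c - d) \<le> \<delta>"
      using dp t(1) dl unfolding DP_def by blast
    have e1: "inner y w = inner y (w - t) + inner y (t - c - d) + inner y c + inner y d"
      by (simp add: inner_diff_right)
    have e2: "inner y c = 0" using y cd(1) by (simp add: orth_def)
    have e3: "inner y d = inner (proj D y) d"
    proof -
      have "inner (y - proj D y) d = 0" using proj_orth[OF D cd(2)] .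
      thus ?thesis by (simp add: inner_diff_left)
    qed
    have b1: "inner y (w - t) \<le> norm y * \<delta>"
    proof -
      have "inner y (w - t) \<le> norm y * norm (w - t)" by (rule norm_cauchy_schwarz)
      also have "\<dots> \<le> norm y * \<delta>" using t(2) by (intro mult_left_mono) (auto simp: dist_norm norm_minus_commute)
      finally show ?thesis .
    qed
    have b2: "inner y (t - c - d) \<le> norm y * \<delta>"
    proof -
      have "inner y (t - c - d) \<le> norm y * norm (t - c - d)" by (rule norm_cauchy_schwarz)
      also have "\<dots> \<le> norm y * \<delta>" using cd(4) by (intro mult_left_mono) auto
      finally show ?thesis .
    qed
    have nt: "norm t \<le> norm w + \<delta>"
      using t(2) norm_triangle_ineq2[of t w] by (simp add: dist_norm)
    have pd0: "pd \<ge> 0" by (simp add: pd_def)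
    have b3: "inner (proj D y) d \<le> M * pd * norm w + M * pd * \<delta>"
    proof -
      have "inner (proj D y) d \<le> pd * norm d" unfolding pd_def by (rule norm_cauchy_schwarz)
      also have "\<dots> \<le> pd * (M * norm t)" using cd(3) pd0 by (intro mult_left_mono)
      also have "\<dots> \<le> pd * (M * (norm w + \<delta>))" using nt M pd0 by (intro mult_left_mono) auto
      finally show ?thesis by (simp add: algebra_simps)
    qed
    have "(2 * norm y + M * pd) * \<delta> = 2 * (norm y * \<delta>) + M * pd * \<delta>" by (simp add: algebra_simps)
    thus ?thesis using ww e1 e2 e3 b1 b2 b3 by linarith
  qed
  have "norm w ^ 2 \<le> M * pd * norm w"
    by (rule le_of_eps[of "2 * norm y + M * pd"]) (use key M in \<open>auto simp: pd_def\<close>)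
  hence "norm w \<le> M * pd"
    using M by (cases "norm w = 0") (auto simp: power2_eq_square mult_le_cancel_right pd_def)
  thus ?thesis using i1 i2 by simp
qed

lemma lemR:
  fixes C D :: "'a::{real_inner,complete_space} set"
  assumes C: "csub C" and D: "csub D" and K: "K \<ge> 0"
    and reg: "\<And>y. y \<in> C \<Longrightarrow> infdist y (C \<inter> D) \<le> K * infdist y D"
  shows "DP C D (1 + K)"
  unfolding DP_def
proof (intro ballI allI impI)
  fix s and e :: real assume s: "s \<in> {c + d | c d. c \<in> C \<and> d \<in> D}" and e: "e > 0"
  then obtain c d where cd: "c \<in> C" "d \<in> D" "s = c + d" by blast
  have CD: "csub (C \<inter> D)" using csub_Int[OF C D] .
  define m where "m = proj (C \<inter> D) c"
  have mCD: "m \<in> C \<inter> D" using proj_in[OF CD] by (simp add: m_def)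
  define c' where "c' = c - m"
  define d' where "d' = d + m"
  have c'C: "c' \<in> C" using C cd mCD by (auto simp: c'_def csub_def subspace_diff)
  have d'D: "d' \<in> D" using D cd mCD by (auto simp: d'_def csub_def subspace_add)
  have "proj (C \<inter> D) c' = 0"
    using proj_diff[OF CD, of c m] proj_self[OF CD mCD] by (simp add: c'_def m_def)
  hence "infdist c' (C \<inter> D) = norm c'" using infdist_csub[OF CD] by simp
  moreover have "-d' \<in> D" using D d'D by (simp add: csub_def subspace_neg)
  hence "infdist c' D \<le> norm s" using infdist_le[of "-d'" D c'] cd(3)
    by (simp add: dist_norm c'_def d'_def algebra_simps)
  ultimately have nc: "norm c' \<le> K * norm s" using reg[OF c'C] K
    by (smt (verit) mult_left_mono)
  have "norm d' = norm (s - c')" by (simp add: cd(3) c'_def d'_def algebra_simps)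
  also have "\<dots> \<le> norm s + norm c'" by (rule norm_triangle_ineq4)
  finally have "norm d' \<le> (1 + K) * norm s" using nc by (simp add: algebra_simps)
  moreover have "norm (s - c' - d') \<le> e" using e by (simp add: cd(3) c'_def d'_def)
  ultimately show "\<exists>c\<in>C. \<exists>d\<in>D. norm d \<le> (1 + K) * norm s \<and> norm (s - c - d) \<le> e"
    using c'C d'D by blast
qed

lemma lemREG:
  fixes A B :: "'a::{real_inner,complete_space} set"
  assumes A: "csub A" and B: "csub B" and M: "M \<ge> 0" and dp: "DP A B M"
  shows "\<And>y. y \<in> A \<Longrightarrow> infdist y (A \<inter> B) \<le> (1 + M) * infdist y B"
    and "\<And>y. y \<in> orth A \<Longrightarrow> infdist y (orth A \<inter> orth B) \<le> M * infdist y (orth B)"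
proof -
  show r1: "\<And>y. y \<in> orth A \<Longrightarrow> infdist y (orth A \<inter> orth B) \<le> M * infdist y (orth B)"
    using lemL[OF A B M dp] by blast
  have dp2: "DP (orth A) (orth B) (1 + M)" by (rule lemR[OF csub_orth csub_orth M r1])
  fix y assume "y \<in> A"
  hence "y \<in> orth (orth A)" using orth_orth[OF A] by simp
  from lemL[OF csub_orth csub_orth _ dp2 this] M
  show "infdist y (A \<inter> B) \<le> (1 + M) * infdist y B" using orth_orth[OF A] orth_orth[OF B] by simp
qed




lemma baire_dp:
  fixes A B :: "'a::{real_inner,complete_space} set"
  assumes A: "csub A" and B: "csub B" and cl: "closed {a + b | a b. a \<in> A \<and> b \<in> B}"
  shows "\<exists>M\<ge>0. DP A B M"
proof -
  define S where "S = {a + b | a b. a \<in> A \<and> b \<in> B}"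
  have subS: "subspace S" unfolding S_def using subspace_sums A B by (auto simp: csub_def)
  have S0: "0 \<in> S" using subS subspace_0 by blast
  define G where "G n = {a + b | a b. a \<in> A \<and> b \<in> B \<and> norm b \<le> real n}" for n :: nat
  define F where "F n = S \<inter> closure (G n)" for n
  define X where "X = top_of_set S"
  have cm: "completely_metrizable_space X"
    unfolding X_def
    by (rule completely_metrizable_space_closedin[OF completely_metrizable_space_euclidean])
       (use cl closed_closedin S_def in auto)
  have "\<exists>n. X interior_of F n \<noteq> {}"
  proof (rule ccontr)
    assume "\<not> ?thesis"
    hence e: "\<And>n. X interior_of F n = {}" by blast
    have "X interior_of \<Union>(range F) = {}"
    proof (rule Baire_category_alt)
      show "completely_metrizable_space X \<or> locally_compact_space X \<and> regular_space X" using cm by blast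
      show "countable (range F)" by simp
      fix T assume "T \<in> range F"
      then obtain n where "T = F n" by blast
      thus "closedin X T \<and> X interior_of T = {}"
        using e closedin_closed_Int[of "closure (G n)" S] by (simp add: X_def F_def)
    qed
    moreover have "\<Union>(range F) = S"
    proof
      show "\<Union>(range F) \<subseteq> S" by (auto simp: F_def)
      show "S \<subseteq> \<Union>(range F)"
      proof
        fix s assume "s \<in> S"
        then obtain a b where ab: "a \<in> A" "b \<in> B" "s = a + b" by (auto simp: S_def)
        obtain n :: nat where "norm b \<le> real n" using real_arch_simple by blast
        hence "s \<in> G n" using ab by (auto simp: G_def)
        hence "s \<in> F n" using \<open>s \<in> S\<close> closure_subset by (auto simp: F_def)
        thus "s \<in> \<Union>(range F)" by blast
      qed
    qed
    ultimately have "X interior_of S = {}" by simp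
    moreover have "X interior_of S = S"
      using interior_of_topspace[of X] by (simp add: X_def)
    ultimately show False using S0 by simp
  qed
  then obtain n s0 where s0: "s0 \<in> X interior_of F n" by blast
  have "openin (top_of_set S) (X interior_of F n)" by (simp add: X_def)
  then obtain r where r: "r > 0" "\<And>y. y \<in> S \<Longrightarrow> dist y s0 < r \<Longrightarrow> y \<in> X interior_of F n"
    using s0 unfolding openin_euclidean_subtopology_iff by blast
  have rF: "\<And>y. y \<in> S \<Longrightarrow> dist y s0 < r \<Longrightarrow> y \<in> closure (G n)"
    using r(2) interior_of_subset[of X "F n"] by (auto simp: F_def)
  have s0S: "s0 \<in> S" using s0 interior_of_subset[of X "F n"] by (auto simp: F_def)
  have small: "\<exists>a\<in>A. \<exists>b\<in>B. norm b \<le> 2 * real n \<and> norm (y - a - b) \<le> e"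
    if y: "y \<in> S" "norm y < r" and e: "e > 0" for y e
  proof -
    have "s0 + y \<in> S" using subS s0S y by (simp add: subspace_add)
    hence "s0 + y \<in> closure (G n)" using rF y by (simp add: dist_norm)
    then obtain g1 where g1: "g1 \<in> G n" "dist g1 (s0 + y) < e/2"
      using e unfolding closure_approachable by (meson half_gt_zero)
    have "s0 \<in> closure (G n)" using rF s0S r by simp
    then obtain g2 where g2: "g2 \<in> G n" "dist g2 s0 < e/2"
      using e unfolding closure_approachable by (meson half_gt_zero)
    obtain a1 b1 where 1: "a1 \<in> A" "b1 \<in> B" "norm b1 \<le> n" "g1 = a1 + b1" using g1 by (auto simp: G_def)
    obtain a2 b2 where 2: "a2 \<in> A" "b2 \<in> B" "norm b2 \<le> n" "g2 = a2 + b2" using g2 by (auto simp: G_def)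
    have aA: "a1 - a2 \<in> A" using A 1 2 by (simp add: csub_def subspace_diff)
    have bB: "b1 - b2 \<in> B" using B 1 2 by (simp add: csub_def subspace_diff)
    have nb: "norm (b1 - b2) \<le> 2 * real n"
      using norm_triangle_ineq4[of b1 b2] 1 2 by simp
    have "y - (a1 - a2) - (b1 - b2) = (g2 - s0) - (g1 - (s0 + y))"
      using 1 2 by (simp add: algebra_simps)
    hence "norm (y - (a1 - a2) - (b1 - b2)) \<le> norm (g2 - s0) + norm (g1 - (s0 + y))"
      by (metis norm_triangle_ineq4)
    also have "\<dots> \<le> e" using g1(2) g2(2) by (simp add: dist_norm)
    finally show ?thesis using aA bB nb by blast
  qed
  define M where "M = 4 * real n / r"
  have M0: "M \<ge> 0" using r by (simp add: M_def)
  have "DP A B M"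
    unfolding DP_def
  proof (intro ballI allI impI)
    fix s and e :: real assume sS: "s \<in> {c + d | c d. c \<in> A \<and> d \<in> B}" and e: "e > 0"
    have sS': "s \<in> S" using sS by (simp add: S_def)
    show "\<exists>c\<in>A. \<exists>d\<in>B. norm d \<le> M * norm s \<and> norm (s - c - d) \<le> e"
    proof (cases "s = 0")
      case True thus ?thesis using csub_basic[OF A] csub_basic[OF B] e by (intro bexI[of _ 0]) auto
    next
      case False
      define l where "l = r / (2 * norm s)"
      have l0: "l > 0" using False r by (simp add: l_def)
      have "l *\<^sub>R s \<in> S" using subS sS' by (simp add: subspace_scale)
      moreover have "norm (l *\<^sub>R s) < r" using False r l0 by (simp add: l_def)
      ultimately obtain a b where ab: "a \<in> A" "b \<in> B" "norm b \<le> 2 * real n"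
          "norm (l *\<^sub>R s - a - b) \<le> l * e"
        using small[of "l *\<^sub>R s" "l * e"] e l0 by auto
      define c where "c = (1/l) *\<^sub>R a"
      define d where "d = (1/l) *\<^sub>R b"
      have cA: "c \<in> A" using A ab by (simp add: c_def csub_def subspace_scale)
      have dB: "d \<in> B" using B ab by (simp add: d_def csub_def subspace_scale)
      have "norm d = norm b / l" using l0 by (simp add: d_def)
      also have "\<dots> \<le> 2 * real n / l" using ab(3) l0 by (simp add: divide_right_mono)
      also have "\<dots> = M * norm s" using False r by (simp add: l_def M_def field_simps)
      finally have nd: "norm d \<le> M * norm s" .
      have "s - c - d = (1/l) *\<^sub>R (l *\<^sub>R s - a - b)"
        using l0 by (simp add: c_def d_def algebra_simps)
      hence "norm (s - c - d) = norm (l *\<^sub>R s - a - b) / l" using l0 by simp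
      also have "\<dots> \<le> e" using ab(4) l0 by (simp add: pos_divide_le_eq mult.commute)
      finally show ?thesis using cA dB nd by blast
    qed
  qed
  thus ?thesis using M0 by blast
qed




definition DR :: "'a::real_inner set \<Rightarrow> 'a set \<Rightarrow> 'a \<Rightarrow> 'a" where
  "DR A B x = proj B (reflector A x) + x - proj A x"

lemma reflector_eq: "reflector A x = 2 *\<^sub>R proj A x - x"
  by (simp add: reflector_def)

lemma DR_expand:
  fixes A B :: "'a::{real_inner,complete_space} set"
  assumes A: "csub A" and B: "csub B"
  shows "DR A B x = 2 *\<^sub>R proj B (proj A x) - proj B x + x - proj A x"
  by (simp add: DR_def reflector_def proj_diff[OF B] proj_scale[OF B])

lemma DR_diff:
  fixes A B :: "'a::{real_inner,complete_space} set"
  assumes A: "csub A" and B: "csub B"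
  shows "DR A B (x - y) = DR A B x - DR A B y"
  by (simp add: DR_expand[OF A B] proj_diff[OF A] proj_diff[OF B] algebra_simps)

lemma DR_zero:
  fixes A B :: "'a::{real_inner,complete_space} set"
  assumes A: "csub A" and B: "csub B"
  shows "DR A B 0 = 0"
  using DR_diff[OF A B, of 0 0] by simp

lemma norm_reflector:
  fixes A :: "'a::{real_inner,complete_space} set"
  assumes A: "csub A"
  shows "norm (reflector A v) = norm v"
proof -
  define w where "w = v - proj A v"
  have o: "inner (proj A v) w = 0"
    using proj_orth[OF A proj_in[OF A], of v] by (simp add: w_def inner_commute)
  have "reflector A v = proj A v - w" by (simp add: reflector_def w_def scaleR_2 algebra_simps)
  hence "norm (reflector A v)^2 = norm (proj A v)^2 + norm w^2" using pyth_diff[OF o] by simp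
  moreover have "norm v^2 = norm (proj A v)^2 + norm w^2"
    using pyth[OF o] by (simp add: w_def)
  ultimately show ?thesis by (metis norm_ge_zero power2_eq_iff_nonneg)
qed

lemma parallelogram_law: "norm (a + b)^2 + norm (a - b)^2 = 2 * norm a^2 + 2 * norm (b::'a::real_inner)^2"
  unfolding power2_norm_eq_inner by (simp add: inner_add_left inner_add_right inner_diff_left
      inner_diff_right inner_commute)

lemma DR_firm:
  fixes A B :: "'a::{real_inner,complete_space} set"
  assumes A: "csub A" and B: "csub B"
  shows "norm (DR A B u)^2 + norm (u - DR A B u)^2 \<le> norm u^2"
proof -
  define N where "N = reflector B (reflector A u)"
  have nN: "norm N = norm u" using norm_reflector[OF A] norm_reflector[OF B] by (simp add: N_def)
  have hN: "N = 2 *\<^sub>R (2 *\<^sub>R proj B (proj A u) - proj B u) - (2 *\<^sub>R proj A u - u)"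
    by (simp add: N_def reflector_def proj_diff[OF B] proj_scale[OF B])
  have e0: "2 *\<^sub>R DR A B u = u + N"
    unfolding hN DR_expand[OF A B] by (simp only: scaleR_2) (simp add: algebra_simps)
  have e1: "DR A B u = (1/2) *\<^sub>R (u + N)"
    unfolding e0[symmetric] by simp
  have e2: "u - DR A B u = (1/2) *\<^sub>R (u - N)"
  proof -
    have "u - DR A B u = (1/2) *\<^sub>R (2 *\<^sub>R u) - (1/2) *\<^sub>R (u + N)" using e1 by simp
    also have "\<dots> = (1/2) *\<^sub>R (2 *\<^sub>R u - (u + N))" by (simp only: scaleR_right_diff_distrib)
    also have "2 *\<^sub>R u - (u + N) = u - N" by (simp add: scaleR_2)
    finally show ?thesis .
  qed
  have "norm (DR A B u)^2 + norm (u - DR A B u)^2 = (norm (u + N)^2 + norm (u - N)^2) / 4"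
  proof -
    have "norm (DR A B u) = norm (u + N) / 2" unfolding e1 by simp
    moreover have "norm (u - DR A B u) = norm (u - N) / 2" unfolding e2 by simp
    ultimately show ?thesis by (simp only:) (simp add: power_divide add_divide_distrib)
  qed
  also have "\<dots> = norm u^2" using parallelogram_law[of u N] nN by simp
  finally show ?thesis by simp
qed

lemma DR_fix:
  fixes A B :: "'a::{real_inner,complete_space} set"
  assumes A: "csub A" and B: "csub B" and p: "p \<in> A \<inter> B" and q: "q \<in> orth A \<inter> orth B"
  shows "DR A B (p + q) = p + q"
proof -
  have pa: "proj A (p + q) = p"
    by (rule proj_eqI[OF A]) (use p q in \<open>auto simp: orth_def\<close>)
  have pb: "proj B (p - q) = p"
    by (rule proj_eqI[OF B]) (use p q in \<open>auto simp: orth_def inner_minus_left\<close>)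
  have "reflector A (p + q) = p - q" by (simp add: reflector_def pa scaleR_2)
  thus ?thesis by (simp add: DR_def pa pb)
qed

lemma DR_reg:
  fixes A B :: "'a::{real_inner,complete_space} set"
  assumes A: "csub A" and B: "csub B" and cl: "closed {a + b | a b. a \<in> A \<and> b \<in> B}"
  shows "\<exists>K\<ge>0. \<forall>x. infdist x (Fix (DR A B)) \<le> K * norm (x - DR A B x)"
proof -
  obtain M where M: "M \<ge> 0" "DP A B M" using baire_dp[OF A B cl] by blast
  note r1 = lemREG(1)[OF A B M] and r2 = lemREG(2)[OF A B M]
  have "infdist x (Fix (DR A B)) \<le> (1 + 2*M) * norm (x - DR A B x)" for x
  proof -
    define a where "a = proj A x"
    define a' where "a' = x - a"
    have aA: "a \<in> A" using proj_in[OF A] by (simp add: a_def)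
    have a'A: "a' \<in> orth A" using proj_orth'[OF A] by (simp add: a'_def a_def)
    define u where "u = a - proj B a"
    define v where "v = proj B a'"
    have uB: "u \<in> orth B" using proj_orth'[OF B] by (simp add: u_def)
    have vB: "v \<in> B" using proj_in[OF B] by (simp add: v_def)
    have uv: "inner u v = 0" using uB vB by (simp add: orth_def)
    have xd: "x - DR A B x = u + v"
    proof -
      have "reflector A x = a - a'" by (simp add: reflector_def a'_def a_def scaleR_2)
      hence "DR A B x = proj B a - proj B a' + a'"
        by (simp add: DR_def proj_diff[OF B] a'_def a_def)
      thus ?thesis by (simp add: u_def v_def a'_def)
    qed
    have "norm (u+v)^2 = norm u^2 + norm v^2" by (rule pyth[OF uv])
    hence "norm u^2 \<le> norm (u+v)^2" "norm v^2 \<le> norm (u+v)^2" by simp_all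
    hence nu: "norm u \<le> norm (u + v)" and nv: "norm v \<le> norm (u + v)"
      using power2_le_imp_le norm_ge_zero by blast+
    define p where "p = proj (A \<inter> B) a"
    define q where "q = proj (orth A \<inter> orth B) a'"
    have pAB: "p \<in> A \<inter> B" using proj_in[OF csub_Int[OF A B]] by (simp add: p_def)
    have qAB: "q \<in> orth A \<inter> orth B" using proj_in[OF csub_Int[OF csub_orth csub_orth]] by (simp add: q_def)
    have fx: "p + q \<in> Fix (DR A B)" using DR_fix[OF A B pAB qAB] by (simp add: Fix_def)
    have "infdist x (Fix (DR A B)) \<le> dist x (p + q)" using fx by (rule infdist_le)
    also have "\<dots> = norm ((a - p) + (a' - q))" by (simp add: dist_norm a'_def algebra_simps)
    also have "\<dots> \<le> norm (a - p) + norm (a' - q)" by (rule norm_triangle_ineq)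
    also have "norm (a - p) = infdist a (A \<inter> B)"
      using infdist_csub[OF csub_Int[OF A B], of a] by (simp add: p_def)
    also have "norm (a' - q) = infdist a' (orth A \<inter> orth B)"
      using infdist_csub[OF csub_Int[OF csub_orth csub_orth], of a' A B] by (simp add: q_def)
    also have "infdist a (A \<inter> B) \<le> (1 + M) * infdist a B" using r1[OF aA] .
    also have "infdist a B = norm u" using infdist_csub[OF B] by (simp add: u_def)
    also have "infdist a' (orth A \<inter> orth B) \<le> M * infdist a' (orth B)" using r2[OF a'A] .
    also have "infdist a' (orth B) = norm v" using infdist_orth[OF B] by (simp add: v_def)
    finally have "infdist x (Fix (DR A B)) \<le> (1 + M) * norm u + M * norm v" by simp
    also have "\<dots> \<le> (1 + M) * norm (u + v) + M * norm (u + v)"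
      using nu nv M by (intro add_mono mult_left_mono) auto
    finally show ?thesis unfolding xd by (simp add: algebra_simps)
  qed
  moreover have "1 + 2*M \<ge> 0" using M by simp
  ultimately show ?thesis by blast
qed




lemma firm_fix:
  fixes T :: "'a::real_inner \<Rightarrow> 'a"
  assumes lin: "\<And>x y. T (x - y) = T x - T y"
    and firm: "\<And>u. norm (T u)^2 + norm (u - T u)^2 \<le> norm u^2"
    and z: "z \<in> Fix T"
  shows "norm (T x - z)^2 + norm (x - T x)^2 \<le> norm (x - z)^2"
proof -
  have "T (x - z) = T x - z" using lin z by (simp add: Fix_def)
  moreover have "(x - z) - (T x - z) = x - T x" by simp
  ultimately show ?thesis using firm[of "x - z"] by simp
qed

lemma chain_ineq:
  fixes T :: "nat \<Rightarrow> 'a::real_inner \<Rightarrow> 'a"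
  assumes fz: "\<And>i x. i \<in> {1..m} \<Longrightarrow> norm (T i x - z)^2 + norm (x - T i x)^2 \<le> norm (x - z)^2"
  shows "k \<le> m \<Longrightarrow> norm (comp_upto T k x - z)^2
     + (\<Sum>j\<in>{1..k}. norm (comp_upto T (j-1) x - comp_upto T j x)^2) \<le> norm (x - z)^2"
proof (induction k)
  case 0 thus ?case by simp
next
  case (Suc k)
  hence IH: "norm (comp_upto T k x - z)^2
     + (\<Sum>j\<in>{1..k}. norm (comp_upto T (j-1) x - comp_upto T j x)^2) \<le> norm (x - z)^2" by simp
  have "Suc k \<in> {1..m}" using Suc.prems by simp
  from fz[OF this, of "comp_upto T k x"]
  have "norm (comp_upto T (Suc k) x - z)^2 + norm (comp_upto T k x - comp_upto T (Suc k) x)^2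
        \<le> norm (comp_upto T k x - z)^2" by simp
  thus ?case using IH by simp
qed

lemma chain_tri:
  fixes T :: "nat \<Rightarrow> 'a::real_normed_vector \<Rightarrow> 'a"
  shows "norm (x - comp_upto T k x) \<le> (\<Sum>j\<in>{1..k}. norm (comp_upto T (j-1) x - comp_upto T j x))"
proof (induction k)
  case 0 thus ?case by simp
next
  case (Suc k)
  have "norm (x - comp_upto T (Suc k) x)
      \<le> norm (x - comp_upto T k x) + norm (comp_upto T k x - comp_upto T (Suc k) x)"
    by (rule norm_diff_triangle_le[of _ "comp_upto T k x"]) simp_all
  thus ?case using Suc.IH by simp
qed


lemma contraction:
  fixes T :: "nat \<Rightarrow> 'a::{real_inner,complete_space} \<Rightarrow> 'a" and Z :: "nat \<Rightarrow> 'a set"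
  assumes m: "m \<ge> 1"
    and fz: "\<And>i x z. i \<in> {1..m} \<Longrightarrow> z \<in> Z i \<Longrightarrow> norm (T i x - z)^2 + norm (x - T i x)^2 \<le> norm (x - z)^2"
    and reg: "\<And>i. i \<in> {1..m} \<Longrightarrow> \<exists>K\<ge>0. \<forall>x. infdist x (Z i) \<le> K * norm (x - T i x)"
    and blr: "boundedly_linearly_regular {1..m} Z"
    and rho: "\<rho> > 0"
  shows "\<exists>q. 0 \<le> q \<and> q < 1 \<and> (\<forall>x. norm x \<le> \<rho> \<longrightarrow>
           infdist (comp_upto T m x) (\<Inter>i\<in>{1..m}. Z i) \<le> q * infdist x (\<Inter>i\<in>{1..m}. Z i))"
proof -
  define W where "W = (\<Inter>i\<in>{1..m}. Z i)"
  from reg obtain Kf where Kf: "\<And>i. i \<in> {1..m} \<Longrightarrow> Kf i \<ge> 0 \<and> (\<forall>x. infdist x (Z i) \<le> Kf i * norm (x - T i x))"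
    by metis
  define K where "K = (\<Sum>i\<in>{1..m}. Kf i)"
  have KfK: "Kf i \<le> K" if "i \<in> {1..m}" for i
    unfolding K_def by (rule member_le_sum) (use that Kf in auto)
  have K0: "K \<ge> 0" unfolding K_def by (rule sum_nonneg) (use Kf in blast)
  have blr': "finite {1..m}" "\<And>i. i \<in> {1..m} \<Longrightarrow> closed (Z i) \<and> convex (Z i)" "W \<noteq> {}"
    "\<And>\<rho>. \<rho> > 0 \<Longrightarrow> \<exists>\<mu>>0. \<forall>x. norm x \<le> \<rho> \<longrightarrow> infdist x W \<le> \<mu> * Max ((\<lambda>i. infdist x (Z i)) ` {1..m})"
    using blr unfolding boundedly_linearly_regular_def W_def by auto
  obtain \<mu> where mu: "\<mu> > 0" "\<And>x. norm x \<le> \<rho> \<Longrightarrow> infdist x W \<le> \<mu> * Max ((\<lambda>i. infdist x (Z i)) ` {1..m})"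
    using blr'(4)[OF rho] by blast
  have Wcl: "closed W" using blr'(2) by (auto simp: W_def intro!: closed_INT)
  have Wcv: "convex W" using blr'(2) by (auto simp: W_def intro!: convex_INT)
  define L where "L = (\<mu> * (1 + K) * real m)^2"
  have L0: "L > 0" using mu K0 m by (simp add: L_def)
  define q where "q = sqrt (max 0 (1 - 1/L))"
  have q0: "q \<ge> 0" by (simp add: q_def)
  have q1: "q < 1" using L0 by (simp add: q_def)
  have main: "infdist (comp_upto T m x) W \<le> q * infdist x W" if xr: "norm x \<le> \<rho>" for x
  proof -
    define S where "S = comp_upto T"
    define \<delta> where "\<delta> j = norm (S (j-1) x - S j x)" for j
    define E where "E = (\<Sum>j\<in>{1..m}. (\<delta> j)^2)"
    define D where "D = (\<Sum>j\<in>{1..m}. \<delta> j)"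
    have d0: "\<delta> j \<ge> 0" for j by (simp add: \<delta>_def)
    have E0: "E \<ge> 0" by (simp add: E_def sum_nonneg)
    have dD: "\<delta> j \<le> D" if "j \<in> {1..m}" for j
      unfolding D_def by (rule member_le_sum) (use that d0 in auto)
    have zi: "infdist x (Z i) \<le> (1 + K) * D" if i: "i \<in> {1..m}" for i
    proof -
      have Si: "S i x = T i (S (i-1) x)" using i by (cases i) (auto simp: S_def)
      have "infdist x (Z i) \<le> infdist (S (i-1) x) (Z i) + dist x (S (i-1) x)" by (rule infdist_triangle)
      also have "infdist (S (i-1) x) (Z i) \<le> Kf i * \<delta> i"
        using Kf[OF i] Si by (simp add: \<delta>_def)
      also have "\<dots> \<le> K * D" using KfK[OF i] dD[OF i] K0 d0 Kf[OF i] by (intro mult_mono) auto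
      also have "dist x (S (i-1) x) \<le> (\<Sum>j\<in>{1..i-1}. \<delta> j)"
        using chain_tri[of x T "i-1"] by (simp add: dist_norm S_def \<delta>_def)
      also have "(\<Sum>j\<in>{1..i-1}. \<delta> j) \<le> D"
        unfolding D_def by (rule sum_mono2) (use i d0 in auto)
      finally show ?thesis by (simp add: algebra_simps)
    qed
    have "Max ((\<lambda>i. infdist x (Z i)) ` {1..m}) \<le> (1 + K) * D"
      using zi m by (subst Max_le_iff) auto
    hence iW: "infdist x W \<le> \<mu> * ((1 + K) * D)" using mu(2)[OF xr] mu(1)
      by (meson mult_left_mono less_imp_le order_trans)
    have "\<delta> j \<le> sqrt E" if "j \<in> {1..m}" for j
    proof (rule real_le_rsqrt)
      show "(\<delta> j)^2 \<le> E" unfolding E_def by (rule member_le_sum) (use that in auto)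
    qed
    hence "D \<le> real (card {1..m}) * sqrt E" unfolding D_def by (rule sum_bounded_above)
    hence Dm: "D \<le> real m * sqrt E" by simp
    have "infdist x W \<le> \<mu> * ((1 + K) * (real m * sqrt E))"
      using iW Dm mu(1) K0 by (smt (verit) mult_left_mono)
    also have "\<dots> = sqrt L * sqrt E" using mu K0 by (simp add: L_def abs_mult)
    finally have "infdist x W \<le> sqrt L * sqrt E" .
    hence "(infdist x W)^2 \<le> (sqrt L * sqrt E)^2" by (intro power_mono) (auto simp: infdist_nonneg)
    hence dLE: "(infdist x W)^2 \<le> L * E" using L0 E0 by (simp add: power_mult_distrib)
    define p where "p = proj W x"
    have pW: "p \<in> W" using proj_props(1)[OF Wcl Wcv blr'(3)] by (simp add: p_def)
    have dp: "infdist x W = norm (x - p)" using infdist_proj[OF Wcl Wcv blr'(3)] by (simp add: p_def dist_norm)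
    have "norm (S m x - p)^2 + E \<le> norm (x - p)^2"
      unfolding S_def E_def \<delta>_def
      by (rule chain_ineq[of m T p m x]) (use fz pW in \<open>auto simp: W_def\<close>)
    hence c1: "norm (S m x - p)^2 \<le> (infdist x W)^2 - E" using dp by simp
    have c2: "(infdist x W)^2 / L \<le> E" using dLE L0 by (simp add: divide_le_eq mult.commute)
    have "(infdist (S m x) W)^2 \<le> norm (S m x - p)^2"
      using infdist_le[OF pW, of "S m x"] by (intro power_mono) (auto simp: dist_norm infdist_nonneg)
    also have "\<dots> \<le> (1 - 1/L) * (infdist x W)^2" using c1 c2 by (simp add: algebra_simps)
    also have "\<dots> \<le> (q * infdist x W)^2"
    proof -
      have "q^2 = max 0 (1 - 1/L)" by (simp add: q_def)
      hence "(1 - 1/L) \<le> q^2" by simp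
      thus ?thesis by (simp add: power_mult_distrib mult_right_mono)
    qed
    finally have "(infdist (S m x) W)^2 \<le> (q * infdist x W)^2" .
    hence "infdist (S m x) W \<le> q * infdist x W"
      by (rule power2_le_imp_le) (use q0 in \<open>simp add: infdist_nonneg\<close>)
    thus ?thesis by (simp add: S_def)
  qed
  show ?thesis using q0 q1 main by (auto simp: W_def)
qed




lemma conv_lin:
  fixes R :: "'a::{real_inner,complete_space} \<Rightarrow> 'a"
  assumes Wcl: "closed W" and Wcv: "convex W" and Wne: "W \<noteq> {}" and W0: "0 \<in> W"
    and fej: "\<And>x z. z \<in> W \<Longrightarrow> norm (R x - z) \<le> norm (x - z)"
    and q: "0 \<le> q" "q < 1"
    and contr: "\<And>x. norm x \<le> \<rho> \<Longrightarrow> infdist (R x) W \<le> q * infdist x W"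
    and x0: "norm x0 \<le> \<rho>"
  shows "\<exists>z\<in>W. converges_linearly (\<lambda>n. (R ^^ n) x0) z"
proof -
  define x where "x n = (R ^^ n) x0" for n
  define d0 where "d0 = infdist x0 W"
  have d00: "d0 \<ge> 0" by (simp add: d0_def infdist_nonneg)
  have fejk: "norm ((R ^^ k) y - z) \<le> norm (y - z)" if "z \<in> W" for k y z
    by (induction k) (use fej[OF that] order_trans in \<open>auto\<close>)
  have bnd: "norm (x n) \<le> norm x0" for n
    using fejk[OF W0, of n x0] by (simp add: x_def)
  have dn: "infdist (x n) W \<le> q^n * d0" for n
  proof (induction n)
    case 0 thus ?case by (simp add: x_def d0_def)
  next
    case (Suc n)
    have "infdist (x (Suc n)) W = infdist (R (x n)) W" by (simp add: x_def)
    also have "\<dots> \<le> q * infdist (x n) W" using contr bnd[of n] x0 by force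
    also have "\<dots> \<le> q * (q^n * d0)" using Suc.IH q by (intro mult_left_mono) auto
    finally show ?case by simp
  qed
  have step: "norm (x (k + n) - x n) \<le> 2 * (q^n * d0)" for k n
  proof -
    define y where "y = x n"
    define p where "p = proj W y"
    have pW: "p \<in> W" using proj_props(1)[OF Wcl Wcv Wne] by (simp add: p_def)
    have "x (k + n) = (R ^^ k) y" by (simp add: x_def y_def funpow_add)
    hence "norm (x (k + n) - x n) = norm ((R ^^ k) y - p + (p - y))" by (simp add: y_def)
    also have "\<dots> \<le> norm ((R ^^ k) y - p) + norm (p - y)" by (rule norm_triangle_ineq)
    also have "\<dots> \<le> norm (y - p) + norm (y - p)"
      using fejk[OF pW, of k y] norm_minus_commute[of p y] by linarith
    also have "norm (y - p) = infdist y W"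
      using infdist_proj[OF Wcl Wcv Wne] by (simp add: p_def dist_norm)
    also have "infdist y W \<le> q^n * d0" using dn by (simp add: y_def)
    finally show ?thesis by (simp add: mult.commute)
  qed
  have qlim: "(\<lambda>n. q^n * c) \<longlonglongrightarrow> 0" for c :: real
    using tendsto_mult[OF LIMSEQ_power_zero[of q] tendsto_const[of c]] q by simp
  have "Cauchy x"
  proof (rule metric_CauchyI)
    fix e :: real assume e: "e > 0"
    have "eventually (\<lambda>n. q^n * (4 * d0) < e) sequentially"
      using order_tendstoD(2)[OF qlim e] .
    then obtain N where N: "\<And>n. n \<ge> N \<Longrightarrow> q^n * (4 * d0) < e" by (auto simp: eventually_sequentially)
    show "\<exists>M. \<forall>m\<ge>M. \<forall>n\<ge>M. dist (x m) (x n) < e"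
    proof (intro exI allI impI)
      fix a b assume ab: "N \<le> a" "N \<le> b"
      have a: "norm (x a - x N) \<le> 2 * (q^N * d0)" using step[of "a - N" N] ab by simp
      have b: "norm (x b - x N) \<le> 2 * (q^N * d0)" using step[of "b - N" N] ab by simp
      have "dist (x a) (x b) \<le> norm (x a - x N) + norm (x b - x N)"
        using norm_triangle_ineq4[of "x a - x N" "x b - x N"] by (simp add: dist_norm)
      also have "\<dots> \<le> q^N * (4 * d0)" using a b by simp
      also have "\<dots> < e" using N by simp
      finally show "dist (x a) (x b) < e" .
    qed
  qed
  then obtain z where xz: "x \<longlonglongrightarrow> z" using Cauchy_convergent_iff convergent_def by blast
  have bz: "norm (x n - z) \<le> 2 * d0 * q^n" for n
  proof -
    have "(\<lambda>k. norm (x (k + n) - x n)) \<longlonglongrightarrow> norm (z - x n)"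
      by (intro tendsto_intros LIMSEQ_ignore_initial_segment xz)
    hence "norm (z - x n) \<le> 2 * (q^n * d0)"
      by (rule LIMSEQ_le_const2) (use step in blast)
    thus ?thesis by (simp add: norm_minus_commute algebra_simps)
  qed
  have zW: "z \<in> W"
  proof -
    have "infdist z W \<le> q^n * (3 * d0)" for n
    proof -
      have "infdist z W \<le> infdist (x n) W + dist z (x n)" by (rule infdist_triangle)
      also have "dist z (x n) \<le> 2 * d0 * q^n" using bz[of n] by (simp add: dist_norm norm_minus_commute)
      finally show ?thesis using dn[of n] by (simp add: algebra_simps)
    qed
    hence "infdist z W \<le> 0"
      by (intro LIMSEQ_le_const[OF qlim[of "3 * d0"]]) auto
    hence "infdist z W = 0" using infdist_nonneg[of z W] by simp
    thus ?thesis using in_closed_iff_infdist_zero[OF Wcl Wne] by simp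
  qed
  have "converges_linearly x z"
    unfolding converges_linearly_def
    by (intro exI[of _ "2 * d0"] exI[of _ q]) (use d00 q bz in auto)
  moreover have "x = (\<lambda>n. (R ^^ n) x0)" by (simp add: x_def fun_eq_iff)
  ultimately show ?thesis using zW by metis
qed


theorem corollary8p3:
  fixes U :: "nat \<Rightarrow> 'a::{real_inner, complete_space} set"
    and m :: nat
    and T :: "nat \<Rightarrow> 'a \<Rightarrow> 'a"
    and Z :: "nat \<Rightarrow> 'a set"
  assumes m: "m \<ge> 1"
    and subsp: "\<And>i. i \<in> {1..m} \<Longrightarrow> subspace (U i) \<and> closed (U i)"
    and wrap: "U (m + 1) = U 1"
    and sumclosed: "\<And>i. i \<in> {1..m} \<Longrightarrow> closed {u + v | u v. u \<in> U i \<and> v \<in> U (i + 1)}"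
    and T_def: "\<And>i. i \<in> {1..m} \<Longrightarrow>
                  T i = (\<lambda>x. proj (U (i + 1)) (reflector (U i) x) + x - proj (U i) x)"
    and Z_def: "\<And>i. i \<in> {1..m} \<Longrightarrow> Z i = Fix (T i)"
    and blr: "boundedly_linearly_regular {1..m} Z"
  shows "\<forall>x0. \<exists>z \<in> (\<Inter>i\<in>{1..m}. Z i).
           converges_linearly (\<lambda>n. (comp_upto T m ^^ n) x0) z"
proof
  fix x0 :: 'a
  define W where "W = (\<Inter>i\<in>{1..m}. Z i)"
  have cA: "csub (U i)" if "i \<in> {1..m}" for i using subsp[OF that] by (simp add: csub_def)
  have cB: "csub (U (i + 1))" if i: "i \<in> {1..m}" for i
  proof (cases "i = m")
    case True thus ?thesis using wrap cA[of 1] m by simp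
  next
    case False thus ?thesis using cA[of "i+1"] i by simp
  qed
  have TD: "T i = DR (U i) (U (i + 1))" if "i \<in> {1..m}" for i
    using T_def[OF that] by (simp add: DR_def fun_eq_iff)
  have fz: "norm (T i x - z)^2 + norm (x - T i x)^2 \<le> norm (x - z)^2"
    if i: "i \<in> {1..m}" and z: "z \<in> Z i" for i x z
    unfolding TD[OF i]
  proof (rule firm_fix)
    show "\<And>x y. DR (U i) (U (i + 1)) (x - y) = DR (U i) (U (i + 1)) x - DR (U i) (U (i + 1)) y"
      by (rule DR_diff[OF cA[OF i] cB[OF i]])
    show "\<And>u. norm (DR (U i) (U (i + 1)) u)^2 + norm (u - DR (U i) (U (i + 1)) u)^2 \<le> norm u^2"
      by (rule DR_firm[OF cA[OF i] cB[OF i]])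
    show "z \<in> Fix (DR (U i) (U (i + 1)))" using z Z_def[OF i] TD[OF i] by simp
  qed
  have reg: "\<exists>K\<ge>0. \<forall>x. infdist x (Z i) \<le> K * norm (x - T i x)" if i: "i \<in> {1..m}" for i
    using DR_reg[OF cA[OF i] cB[OF i] sumclosed[OF i]] Z_def[OF i] TD[OF i] by simp
  have blr': "\<And>i. i \<in> {1..m} \<Longrightarrow> closed (Z i) \<and> convex (Z i)" "W \<noteq> {}"
    using blr unfolding boundedly_linearly_regular_def W_def by auto
  have Wcl: "closed W" using blr'(1) by (auto simp: W_def intro!: closed_INT)
  have Wcv: "convex W" using blr'(1) by (auto simp: W_def intro!: convex_INT)
  have W0: "0 \<in> W"
  proof -
    have "0 \<in> Z i" if i: "i \<in> {1..m}" for i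
      using Z_def[OF i] TD[OF i] DR_zero[OF cA[OF i] cB[OF i]] by (simp add: Fix_def)
    thus ?thesis by (simp add: W_def)
  qed
  have fej: "norm (comp_upto T m x - z) \<le> norm (x - z)" if z: "z \<in> W" for x z
  proof -
    have "norm (comp_upto T m x - z)^2
       + (\<Sum>j\<in>{1..m}. norm (comp_upto T (j-1) x - comp_upto T j x)^2) \<le> norm (x - z)^2"
      by (rule chain_ineq[of m T z m x]) (use fz z in \<open>auto simp: W_def\<close>)
    moreover have "(\<Sum>j\<in>{1..m}. norm (comp_upto T (j-1) x - comp_upto T j x)^2) \<ge> 0"
      by (rule sum_nonneg) simp
    ultimately have "norm (comp_upto T m x - z)^2 \<le> norm (x - z)^2" by linarith
    thus ?thesis by (rule power2_le_imp_le) simp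
  qed
  have rho: "norm x0 + 1 > 0" by (simp add: add_nonneg_pos)
  obtain q where q: "0 \<le> q" "q < 1"
    "\<And>x. norm x \<le> norm x0 + 1 \<Longrightarrow> infdist (comp_upto T m x) W \<le> q * infdist x W"
    using contraction[OF m fz reg blr rho] unfolding W_def by blast
  have "\<exists>z\<in>W. converges_linearly (\<lambda>n. (comp_upto T m ^^ n) x0) z"
    by (rule conv_lin[OF Wcl Wcv blr'(2) W0 fej q(1) q(2) q(3)]) (auto simp: W_def)
  thus "\<exists>z \<in> (\<Inter>i\<in>{1..m}. Z i). converges_linearly (\<lambda>n. (comp_upto T m ^^ n) x0) z"
    by (simp add: W_def)
qed


end
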